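(* Let $D=(V,E;s,t)$, $N$, $\mathscr{B}$ be as in the context, let $x\in\mathcal{C}(\widetilde\Gamma_D)$ and let $\phi_x$ be its potential. Then (i) for every $s$-$t$ path $P$, $x(N\cap P)=1+\sum_{(u,v)\in J_P}\big(\phi_x(u)-\phi_x(v)\big)$; (ii) for every cycle $C$, $x(N\cap C)=\sum_{(u,v)\in J_C}\big(\phi_x(u)-\phi_x(v)\big)$.
   Context: $D=(V,E;s,t)$ is a directed network with unit arc capacities (parallel arcs allowed); $N\subseteq E$ is the set of private arcs (players), $M=E\setminus N$ public arcs; every $s$-$t$ path contains an arc of $N$ and every arc lies on some $s$-$t$ path. A path is a set of arcs joining a sequence of distinct vertices along the same direction. Two paths are disjoint on $N$ if they share no arc of $N$; $\sigma_N$ is the maximum number of $s$-$t$ paths pairwise disjoint on $N$. For $S\subseteq N$, $\gamma(S)$ is the maximum number of pairwise arc-disjoint $s$-$t$ paths in $D_S=(V,S\cup M;s,t)$. Auxiliary game $\widetilde\Gamma_D=(N,\tilde\gamma)$: $\tilde\gamma(N)=\sigma_N$, $\tilde\gamma(S)=\gamma(S)$ for $S\subsetneq N$; core $\mathcal{C}(\widetilde\Gamma_D)=\{x\in\mathbb{R}^N_{\ge0}:x(N)=\sigma_N,\ x(S)\ge\tilde\gamma(S)\ \forall S\subseteq N\}$ with $x(S)=\sum_{i\in S}x_i$. Potential: $\phi_x(v)$ is the length of a shortest $s$-$v$ path when arcs $e\in N$ have length $x(e)$ and public arcs length $0$. Fix a maximum family $\mathscr{B}$ of $s$-$t$ paths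 pairwise disjoint on $N$; a $\mathscr{B}$-vertex is a vertex on a path of $\mathscr{B}$. A $u$-$v$ jump is a $u$-$v$ path whose end vertices are $\mathscr{B}$-vertices, with no intermediate $\mathscr{B}$-vertex, and which is not a single arc of a path of $\mathscr{B}$; $(u,v)$ is its jump pair. For an $s$-$t$ path or cycle $W$, cut $W$ at each of its $\mathscr{B}$-vertices into consecutive pieces (each going from a $\mathscr{B}$-vertex $u$ to the next $\mathscr{B}$-vertex $v$ along $W$); $J_W$ is the set of pairs $(u,v)$ of those pieces that are jumps, i.e. $W=P_0*Q_1*P_1*\cdots*Q_r*P_r$ with $P_i$ (possibly empty) subpaths of paths of $\mathscr{B}$, $Q_i$ jumps, and $J_W$ the jump pairs of $Q_1,\dots,Q_r$ ($J_W=\emptyset$ if $W$ is a cycle without $\mathscr{B}$-vertices). *)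

theory Defs
  imports Complex_Main
begin

text \<open>A directed multigraph is given by a set of arcs E (of type 'e) together with
  tail / head maps src, dst :: 'e => 'v.  Paths and cycles are lists of arcs.\<close>

fun walk :: "'e set \<Rightarrow> ('e \<Rightarrow> 'v) \<Rightarrow> ('e \<Rightarrow> 'v) \<Rightarrow> 'v \<Rightarrow> 'e list \<Rightarrow> 'v \<Rightarrow> bool" where
  "walk E src dst u [] v = (u = v)"
| "walk E src dst u (e # es) v = (e \<in> E \<and> src e = u \<and> walk E src dst (dst e) es v)"

definition is_path :: "'e set \<Rightarrow> ('e \<Rightarrow> 'v) \<Rightarrow> ('e \<Rightarrow> 'v) \<Rightarrow> 'v \<Rightarrow> 'e list \<Rightarrow> 'v \<Rightarrow> bool" where
  "is_path E src dst u P v \<longleftrightarrow> walk E src dst u P v \<and> distinct (u # map dst P)"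

definition st_paths :: "'e set \<Rightarrow> ('e \<Rightarrow> 'v) \<Rightarrow> ('e \<Rightarrow> 'v) \<Rightarrow> 'v \<Rightarrow> 'v \<Rightarrow> 'e list set" where
  "st_paths E src dst s t = {P. is_path E src dst s P t}"

definition is_cycle :: "'e set \<Rightarrow> ('e \<Rightarrow> 'v) \<Rightarrow> ('e \<Rightarrow> 'v) \<Rightarrow> 'e list \<Rightarrow> bool" where
  "is_cycle E src dst C \<longleftrightarrow> C \<noteq> [] \<and> walk E src dst (src (hd C)) C (src (hd C)) \<and> distinct (map dst C)"

definition disjoint_on :: "'e set \<Rightarrow> 'e list \<Rightarrow> 'e list \<Rightarrow> bool" where
  "disjoint_on N P Q \<longleftrightarrow> set P \<inter> set Q \<inter> N = {}"

definition sigmaN :: "'e set \<Rightarrow> ('e \<Rightarrow> 'v) \<Rightarrow> ('e \<Rightarrow> 'v) \<Rightarrow> 'v \<Rightarrow> 'v \<Rightarrow> 'e set \<Rightarrow> nat" where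
  "sigmaN E src dst s t N = Max {card F | F. finite F \<and> F \<subseteq> st_paths E src dst s t \<and> pairwise (disjoint_on N) F}"

definition gammaS :: "'e set \<Rightarrow> ('e \<Rightarrow> 'v) \<Rightarrow> ('e \<Rightarrow> 'v) \<Rightarrow> 'v \<Rightarrow> 'v \<Rightarrow> 'e set \<Rightarrow> 'e set \<Rightarrow> nat" where
  "gammaS E src dst s t N S = Max {card F | F. finite F \<and> F \<subseteq> st_paths (S \<union> (E - N)) src dst s t
        \<and> pairwise (\<lambda>P Q. set P \<inter> set Q = {}) F}"

definition gamma_tilde :: "'e set \<Rightarrow> ('e \<Rightarrow> 'v) \<Rightarrow> ('e \<Rightarrow> 'v) \<Rightarrow> 'v \<Rightarrow> 'v \<Rightarrow> 'e set \<Rightarrow> 'e set \<Rightarrow> nat" where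
  "gamma_tilde E src dst s t N S = (if S = N then sigmaN E src dst s t N else gammaS E src dst s t N S)"

text \<open>Core of the auxiliary game; an allocation x in R^N is a real function on arcs of which
  only the values on N matter.\<close>
definition core :: "'e set \<Rightarrow> ('e \<Rightarrow> 'v) \<Rightarrow> ('e \<Rightarrow> 'v) \<Rightarrow> 'v \<Rightarrow> 'v \<Rightarrow> 'e set \<Rightarrow> ('e \<Rightarrow> real) set" where
  "core E src dst s t N = {x. (\<forall>e\<in>N. 0 \<le> x e) \<and> sum x N = real (sigmaN E src dst s t N)
      \<and> (\<forall>S. S \<subseteq> N \<longrightarrow> real (gamma_tilde E src dst s t N S) \<le> sum x S)}"

definition potential :: "'e set \<Rightarrow> ('e \<Rightarrow> 'v) \<Rightarrow> ('e \<Rightarrow> 'v) \<Rightarrow> 'v \<Rightarrow> 'e set \<Rightarrow> ('e \<Rightarrow> real) \<Rightarrow> 'v \<Rightarrow> real" where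
  "potential E src dst s N x v = Min {(\<Sum>e\<in>set P. if e \<in> N then x e else 0) | P. is_path E src dst s P v}"

definition max_family :: "'e set \<Rightarrow> ('e \<Rightarrow> 'v) \<Rightarrow> ('e \<Rightarrow> 'v) \<Rightarrow> 'v \<Rightarrow> 'v \<Rightarrow> 'e set \<Rightarrow> 'e list set \<Rightarrow> bool" where
  "max_family E src dst s t N B \<longleftrightarrow> finite B \<and> B \<subseteq> st_paths E src dst s t \<and> pairwise (disjoint_on N) B
      \<and> card B = sigmaN E src dst s t N"

definition B_vertices :: "('e \<Rightarrow> 'v) \<Rightarrow> ('e \<Rightarrow> 'v) \<Rightarrow> 'e list set \<Rightarrow> 'v set" where
  "B_vertices src dst B = (\<Union>P\<in>B. src ` set P \<union> dst ` set P)"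

definition is_jump :: "'e set \<Rightarrow> ('e \<Rightarrow> 'v) \<Rightarrow> ('e \<Rightarrow> 'v) \<Rightarrow> 'e list set \<Rightarrow> 'v \<Rightarrow> 'e list \<Rightarrow> 'v \<Rightarrow> bool" where
  "is_jump E src dst B u Q v \<longleftrightarrow> Q \<noteq> [] \<and> is_path E src dst u Q v
     \<and> u \<in> B_vertices src dst B \<and> v \<in> B_vertices src dst B
     \<and> (\<forall>w\<in>set (butlast (map dst Q)). w \<notin> B_vertices src dst B)
     \<and> \<not> (\<exists>e. Q = [e] \<and> (\<exists>P\<in>B. e \<in> set P))"

definition J_path :: "'e set \<Rightarrow> ('e \<Rightarrow> 'v) \<Rightarrow> ('e \<Rightarrow> 'v) \<Rightarrow> 'e list set \<Rightarrow> 'e list \<Rightarrow> ('v \<times> 'v) set" where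
  "J_path E src dst B W = {(u, v). \<exists>i j. i < j \<and> j \<le> length W
       \<and> is_jump E src dst B u (take (j - i) (drop i W)) v}"

definition J_cycle :: "'e set \<Rightarrow> ('e \<Rightarrow> 'v) \<Rightarrow> ('e \<Rightarrow> 'v) \<Rightarrow> 'e list set \<Rightarrow> 'e list \<Rightarrow> ('v \<times> 'v) set" where
  "J_cycle E src dst B W = {(u, v). \<exists>n j. 0 < j \<and> j \<le> length W
       \<and> is_jump E src dst B u (take j (rotate n W)) v}"

end

theory Submission
  imports Defs
begin


lemma walk_append: "walk E src dst u (xs @ ys) v \<longleftrightarrow> (\<exists>w. walk E src dst u xs w \<and> walk E src dst w ys v)"
  by (induction xs arbitrary: u) auto

lemma walk_set: "walk E src dst u xs v \<Longrightarrow> set xs \<subseteq> E"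
  by (induction xs arbitrary: u) auto

lemma walk_ends: "walk E src dst u Q v \<Longrightarrow> Q \<noteq> [] \<Longrightarrow> src (hd Q) = u \<and> dst (last Q) = v"
  by (induction Q arbitrary: u) auto

lemma walk_src_sub: "walk E src dst w W v \<Longrightarrow> src ` set W \<subseteq> insert w (dst ` set (butlast W))"
proof (induction W arbitrary: w)
  case Nil then show ?case by simp
next
  case (Cons e es)
  then have "src ` set es \<subseteq> insert (dst e) (dst ` set (butlast es))" by auto
  then show ?case using Cons.prems by (cases "es = []") auto
qed

lemma walk_src_last: "walk E src dst u W v \<Longrightarrow> length W \<ge> 2 \<Longrightarrow> src (last W) \<in> set (butlast (map dst W))"
proof -
  assume w: "walk E src dst u W v" and l: "length W \<ge> 2"
  have W: "W = butlast W @ [last W]" using l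
    by (metis append_butlast_last_id list.size(3) not_numeral_le_zero)
  obtain z where z1: "walk E src dst u (butlast W) z" and z2: "walk E src dst z [last W] v"
    using w W walk_append by metis
  have bn: "butlast W \<noteq> []" using l by (cases W) (auto simp: le_Suc_eq)
  have "z = dst (last (butlast W))" using walk_ends[OF z1 bn] by simp
  moreover have "src (last W) = z" using z2 by simp
  moreover have "last (butlast W) \<in> set (butlast W)" using bn by simp
  ultimately show ?thesis using bn by (metis image_eqI list.set_map map_butlast)
qed

lemma walk_to_path: "walk E src dst u W v \<Longrightarrow> \<exists>P. is_path E src dst u P v \<and> set P \<subseteq> set W"
proof (induction W arbitrary: u)
  case Nil then show ?case by (auto simp: is_path_def)
next
  case (Cons e es)
  then have e: "e \<in> E" "src e = u" and w: "walk E src dst (dst e) es v" by auto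
  from Cons.IH[OF w] obtain P where P: "is_path E src dst (dst e) P v" "set P \<subseteq> set es" by blast
  show ?case
  proof (cases "u = dst e")
    case True then show ?thesis using P by auto
  next
    case False
    show ?thesis
    proof (cases "u \<in> dst ` set P")
      case True
      then obtain e' where e': "e' \<in> set P" "dst e' = u" by auto
      then obtain P1 P2 where PP: "P = P1 @ e' # P2" by (meson split_list)
      from P(1) obtain z where "walk E src dst (dst e) P1 z" "walk E src dst z (e' # P2) v"
        unfolding is_path_def PP walk_append by blast
      then have "walk E src dst u P2 v" using e' by auto
      moreover have "distinct (u # map dst P2)" using P(1) e' unfolding is_path_def PP by auto
      ultimately show ?thesis using P(2) PP by (auto simp: is_path_def)
    next
      case False
      then have "is_path E src dst u (e # P) v" using P(1) e \<open>u \<noteq> dst e\<close> by (auto simp: is_path_def)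
      then show ?thesis using P(2) by (intro exI[of _ "e#P"]) auto
    qed
  qed
qed

lemma finite_paths: "finite E \<Longrightarrow> finite (st_paths E src dst s t)"
proof -
  assume f: "finite E"
  have "st_paths E src dst s t \<subseteq> {xs. set xs \<subseteq> E \<and> distinct xs}"
  proof
    fix P assume "P \<in> st_paths E src dst s t"
    then have w: "walk E src dst s P t" and d: "distinct (s # map dst P)" by (auto simp: st_paths_def is_path_def)
    have "distinct P" using d by (simp add: distinct_map)
    then show "P \<in> {xs. set xs \<subseteq> E \<and> distinct xs}" using walk_set[OF w] by simp
  qed
  then show ?thesis using finite_subset_distinct[OF f] finite_subset by blast
qed

lemma Max_ge1: "finite X \<Longrightarrow> x0 \<in> X \<Longrightarrow> 1 \<le> Max {card F | F. finite F \<and> F \<subseteq> X \<and> pairwise R F}"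
proof -
  assume X: "finite X" "x0 \<in> X"
  have "{card F | F. finite F \<and> F \<subseteq> X \<and> pairwise R F} \<subseteq> card ` Pow X" by auto
  then have fin: "finite {card F | F. finite F \<and> F \<subseteq> X \<and> pairwise R F}" using X(1) finite_subset by blast
  have "card {x0} \<in> {card F | F. finite F \<and> F \<subseteq> X \<and> pairwise R F}"
    using X by (intro CollectI exI[of _ "{x0}"]) (auto simp: pairwise_def)
  then have "card {x0} \<le> Max {card F | F. finite F \<and> F \<subseteq> X \<and> pairwise R F}" by (rule Max_ge[OF fin])
  then show ?thesis by simp
qed

lemma walk_nth_src: "walk E src dst u W v \<Longrightarrow> 0 < i \<Longrightarrow> i < length W \<Longrightarrow> src (W!i) = dst (W!(i-1))"
proof (induction W arbitrary: u i)
  case Nil then show ?case by simp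
next
  case (Cons e es)
  show ?case
  proof (cases "i = 1")
    case True then show ?thesis using Cons.prems by (cases es) auto
  next
    case False
    have w: "walk E src dst (dst e) es v" using Cons.prems(1) by simp
    have "0 < i - 1" "i - 1 < length es" using False Cons.prems by auto
    then have "src (es!(i-1)) = dst (es!(i-1-1))" using Cons.IH[OF w] by blast
    then show ?thesis using False Cons.prems by (cases i) auto
  qed
qed

lemma in_butlast_dst: "m < length W - 1 \<Longrightarrow> dst (W!m) \<in> set (butlast (map dst W))"
proof -
  assume m: "m < length W - 1"
  then have "butlast W ! m \<in> set (butlast W)" by (simp add: nth_mem)
  moreover have "butlast W ! m = W ! m" using m by (simp add: nth_butlast)
  ultimately have "dst (W ! m) \<in> set (map dst (butlast W))" by force
  then show ?thesis by (simp add: map_butlast)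
qed

lemma J_pathI: "i < j \<Longrightarrow> j \<le> length W \<Longrightarrow> is_jump E src dst B a (take (j-i) (drop i W)) b \<Longrightarrow> (a,b) \<in> J_path E src dst B W"
  unfolding J_path_def by blast

lemma J_path_split:
  assumes wk: "walk E src dst u W v" and WW: "W = W1 @ W2" and ne: "W1 \<noteq> []"
    and w: "w = dst (last W1)" and u: "u \<in> B_vertices src dst B" and wB: "w \<in> B_vertices src dst B"
    and int: "\<forall>z\<in>set (butlast (map dst W1)). z \<notin> B_vertices src dst B"
  shows "J_path E src dst B W = (if is_jump E src dst B u W1 w then {(u,w)} else {}) \<union> J_path E src dst B W2"
proof
  define k where "k = length W1"
  have k0: "0 < k" using ne k_def by simp
  obtain z where wk1: "walk E src dst u W1 z" and wk2: "walk E src dst z W2 v" using wk WW walk_append by metis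
  have zw: "z = w" using walk_ends[OF wk1 ne] w by simp
  have hdu: "src (hd W1) = u" using walk_ends[OF wk1 ne] by simp
  show "J_path E src dst B W \<subseteq> (if is_jump E src dst B u W1 w then {(u,w)} else {}) \<union> J_path E src dst B W2"
  proof
    fix p assume "p \<in> J_path E src dst B W"
    then obtain a b i j where p: "p = (a,b)" and ij: "i < j" "j \<le> length W"
      and jq: "is_jump E src dst B a (take (j - i) (drop i W)) b"
      unfolding J_path_def by blast
    define Q where "Q = take (j - i) (drop i W)"
    have jQ: "is_jump E src dst B a Q b" using jq unfolding Q_def .
    have Qne: "Q \<noteq> []" using jQ unfolding is_jump_def by blast
    have Qp: "walk E src dst a Q b" using jQ unfolding is_jump_def is_path_def by blast
    have aB: "a \<in> B_vertices src dst B" and bB: "b \<in> B_vertices src dst B"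
      and Qint: "\<forall>z\<in>set (butlast (map dst Q)). z \<notin> B_vertices src dst B"
      using jQ unfolding is_jump_def by blast+
    have lenQ: "length Q = j - i" using ij Q_def by simp
    have Qnth: "\<And>m. m < j - i \<Longrightarrow> Q!m = W!(i+m)" using ij Q_def by simp
    have a: "a = src (W!i)" using walk_ends[OF Qp Qne] Qnth[of 0] ij by (simp add: hd_conv_nth[OF Qne])
    have b: "b = dst (W!(j-1))" using walk_ends[OF Qp Qne] Qnth[of "j-i-1"] ij
      by (simp add: last_conv_nth[OF Qne] lenQ)
    have W1n: "\<And>m. m < k \<Longrightarrow> W!m = W1!m" using WW k_def by (simp add: nth_append)
    consider "k \<le> i" | "0 < i \<and> i < k" | "i = 0 \<and> j < k" | "i = 0 \<and> k < j" | "i = 0 \<and> j = k" by linarith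
    then show "p \<in> (if is_jump E src dst B u W1 w then {(u,w)} else {}) \<union> J_path E src dst B W2"
    proof cases
      case 1
      have d: "drop i W = drop (i - k) W2" using 1 WW k_def by simp
      have l: "i - k < j - k" "j - k \<le> length W2" using 1 ij WW k_def by auto
      have m: "j - i = (j - k) - (i - k)" using 1 by simp
      have eq: "take (j - i) (drop i W) = take ((j - k) - (i - k)) (drop (i - k) W2)" using d m by simp
      have "is_jump E src dst B a (take ((j - k) - (i - k)) (drop (i - k) W2)) b" using jq unfolding eq .
      then have "(a, b) \<in> J_path E src dst B W2" by (rule J_pathI[OF l])
      then have "p \<in> J_path E src dst B W2" using p by simp
      then show ?thesis by blast
    next
      case 2
      have "a = dst (W!(i-1))" using a walk_nth_src[OF wk, of i] 2 ij by simp
      moreover have "W!(i-1) = W1!(i-1)" using 2 by (intro W1n) linarith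
      moreover have "i - 1 < length W1 - 1" using 2 k_def by linarith
      ultimately have "a \<in> set (butlast (map dst W1))" using in_butlast_dst[of "i-1" W1 dst] by simp
      then show ?thesis using int aB by blast
    next
      case 3
      have "W!(j-1) = W1!(j-1)" using 3 by (intro W1n) linarith
      moreover have "j - 1 < length W1 - 1" using 3 ij k_def by linarith
      ultimately have "b \<in> set (butlast (map dst W1))" using b in_butlast_dst[of "j-1" W1 dst] by simp
      then show ?thesis using int bB by blast
    next
      case 4
      have "dst (Q!(k-1)) \<in> set (butlast (map dst Q))" using 4 lenQ k0 by (intro in_butlast_dst) auto
      moreover have "Q!(k-1) = W1!(k-1)"
      proof -
        have "k - 1 < j - i" using 4 k0 by linarith
        then have "Q!(k-1) = W!(i + (k-1))" by (rule Qnth)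
        moreover have "W!(k-1) = W1!(k-1)" using k0 by (intro W1n) linarith
        ultimately show ?thesis using 4 by simp
      qed
      moreover have "dst (W1!(k-1)) = w" using w k_def ne by (simp add: last_conv_nth)
      ultimately show ?thesis using Qint wB by auto
    next
      case 5
      then have "Q = W1" using Q_def WW k_def by simp
      moreover have "a = u" using a 5 hdu W1n[of 0] k0 ne by (simp add: hd_conv_nth)
      moreover have "b = w" using b 5 W1n[of "k-1"] k0 w k_def ne by (simp add: last_conv_nth)
      ultimately show ?thesis using jq p Q_def by simp
    qed
  qed
  show "(if is_jump E src dst B u W1 w then {(u,w)} else {}) \<union> J_path E src dst B W2 \<subseteq> J_path E src dst B W"
  proof
    fix p assume "p \<in> (if is_jump E src dst B u W1 w then {(u,w)} else {}) \<union> J_path E src dst B W2"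
    then consider "p = (u,w)" "is_jump E src dst B u W1 w" | "p \<in> J_path E src dst B W2"
      by (auto split: if_splits)
    then show "p \<in> J_path E src dst B W"
    proof cases
      case 1
      have eq: "take (k - 0) (drop 0 W) = W1" using WW k_def by simp
      have jj: "is_jump E src dst B u (take (k - 0) (drop 0 W)) w" unfolding eq using 1(2) .
      have kl: "k \<le> length W" using WW k_def by simp
      have "(u, w) \<in> J_path E src dst B W" by (rule J_pathI[OF k0 kl jj])
      then show ?thesis using 1(1) by simp
    next
      case 2
      then obtain a b i j where p: "p = (a,b)" and ij: "i < j" "j \<le> length W2"
        and jq: "is_jump E src dst B a (take (j - i) (drop i W2)) b"
        unfolding J_path_def by blast
      have eq: "take ((j+k) - (i+k)) (drop (i+k) W) = take (j - i) (drop i W2)" using WW k_def by simp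
      have jj: "is_jump E src dst B a (take ((j+k) - (i+k)) (drop (i+k) W)) b" unfolding eq using jq .
      have l1: "i + k < j + k" and l2: "j + k \<le> length W" using ij WW k_def by auto
      have "(a, b) \<in> J_path E src dst B W" by (rule J_pathI[OF l1 l2 jj])
      then show ?thesis using p by simp
    qed
  qed
qed

lemma first_piece: "W \<noteq> [] \<Longrightarrow> dst (last W) \<in> S \<Longrightarrow> \<exists>W1 W2. W = W1 @ W2 \<and> W1 \<noteq> [] \<and> dst (last W1) \<in> S \<and> (\<forall>z\<in>set (butlast (map dst W1)). z \<notin> S)"
proof (induction W)
  case Nil then show ?case by simp
next
  case (Cons e es)
  show ?case
  proof (cases "dst e \<in> S")
    case True then show ?thesis by (intro exI[of _ "[e]"] exI[of _ es]) auto
  next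
    case False
    then have "es \<noteq> []" using Cons.prems by auto
    then obtain W1 W2 where "es = W1 @ W2" "W1 \<noteq> []" "dst (last W1) \<in> S" "\<forall>z\<in>set (butlast (map dst W1)). z \<notin> S"
      using Cons by auto
    then show ?thesis using False by (intro exI[of _ "e # W1"] exI[of _ W2]) auto
  qed
qed

lemma J_path_sub: "J_path E src dst B W \<subseteq> (src ` set W) \<times> (dst ` set W)"
proof
  fix p assume "p \<in> J_path E src dst B W"
  then obtain a b i j where p: "p = (a,b)" and ij: "i < j" "j \<le> length W"
      and jq: "is_jump E src dst B a (take (j - i) (drop i W)) b"
      unfolding J_path_def by blast
  define Q where "Q = take (j - i) (drop i W)"
  have jQ: "is_jump E src dst B a Q b" using jq unfolding Q_def .
  have Qne: "Q \<noteq> []" using jQ unfolding is_jump_def by blast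
  have Qp: "walk E src dst a Q b" using jQ unfolding is_jump_def is_path_def by blast
  have sQ: "set Q \<subseteq> set W" unfolding Q_def by (meson order_trans set_drop_subset set_take_subset)
  have "hd Q \<in> set W" "last Q \<in> set W" using Qne sQ by auto
  then show "p \<in> (src ` set W) \<times> (dst ` set W)" using walk_ends[OF Qp Qne] p by auto
qed

lemma J_path_Nil: "J_path E src dst B [] = {}"
  unfolding J_path_def by auto

lemma sum_formula:
  fixes x :: "'e \<Rightarrow> real" and phi :: "'v \<Rightarrow> real"
  assumes H1': "\<forall>P\<in>B. \<forall>e\<in>set P. sum x (N \<inter> {e}) = phi (dst e) - phi (src e)"
    and H2': "\<forall>e. (\<forall>P\<in>B. e \<notin> set P) \<longrightarrow> e \<in> N \<longrightarrow> x e = 0"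
  shows "walk E src dst u W v \<Longrightarrow> distinct (map dst W) \<Longrightarrow> (u \<in> dst ` set W \<longrightarrow> u = v)
    \<Longrightarrow> u \<in> B_vertices src dst B \<Longrightarrow> v \<in> B_vertices src dst B
    \<Longrightarrow> sum x (N \<inter> set W) = phi v - phi u + (\<Sum>(a, b)\<in>J_path E src dst B W. phi a - phi b)"
proof (induction "length W" arbitrary: u W rule: less_induct)
  case less
  have H1: "\<And>e P. P \<in> B \<Longrightarrow> e \<in> set P \<Longrightarrow> sum x (N \<inter> {e}) = phi (dst e) - phi (src e)" using H1' by blast
  have H2: "\<And>e. (\<forall>P\<in>B. e \<notin> set P) \<Longrightarrow> e \<in> N \<Longrightarrow> x e = 0" using H2' by blast
  let ?BV = "B_vertices src dst B"
  show ?case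
  proof (cases "W = []")
    case True then show ?thesis using less.prems by (simp add: J_path_Nil)
  next
    case Wne: False
    have v: "v = dst (last W)" using walk_ends[OF less.prems(1) Wne] by simp
    obtain W1 W2 where WW: "W = W1 @ W2" and ne: "W1 \<noteq> []" and wB: "dst (last W1) \<in> ?BV"
      and int: "\<forall>z\<in>set (butlast (map dst W1)). z \<notin> ?BV"
      using first_piece[OF Wne, where S = ?BV] less.prems(5) v by blast
    define w where "w = dst (last W1)"
    obtain z where wk1: "walk E src dst u W1 z" and wk2: "walk E src dst z W2 v"
      using less.prems(1) WW walk_append by metis
    have zw: "z = w" using walk_ends[OF wk1 ne] w_def by simp
    have hdu: "src (hd W1) = u" using walk_ends[OF wk1 ne] by simp
    have dW: "distinct (map dst W1 @ map dst W2)" using less.prems(2) WW by simp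
    have wnot: "w \<notin> dst ` set W2"
    proof -
      have "w \<in> dst ` set W1" using ne w_def by simp
      then show ?thesis using dW by auto
    qed
    have IH: "sum x (N \<inter> set W2) = phi v - phi w + (\<Sum>(a, b)\<in>J_path E src dst B W2. phi a - phi b)"
      using less.hyps[of W2 w] WW ne wk2 zw dW wnot wB w_def less.prems(5) by auto
    have dist: "distinct W" using less.prems(2) distinct_map by blast
    have disj: "set W1 \<inter> set W2 = {}" using dist WW by simp
    have split: "sum x (N \<inter> set W) = sum x (N \<inter> set W1) + sum x (N \<inter> set W2)"
    proof -
      have "N \<inter> set W = (N \<inter> set W1) \<union> (N \<inter> set W2)" using WW by auto
      moreover have "(N \<inter> set W1) \<inter> (N \<inter> set W2) = {}" using disj by auto
      ultimately show ?thesis by (simp add: sum.union_disjoint)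
    qed
    have JS: "J_path E src dst B W = (if is_jump E src dst B u W1 w then {(u,w)} else {}) \<union> J_path E src dst B W2"
      using J_path_split[OF less.prems(1) WW ne w_def less.prems(4)] wB int w_def by simp
    have finJ: "finite (J_path E src dst B W2)"
      using J_path_sub[of E src dst B W2] finite_subset by blast
    show ?thesis
    proof (cases "\<exists>e. W1 = [e] \<and> (\<exists>P\<in>B. e \<in> set P)")
      case True
      then obtain e P where e: "W1 = [e]" "P \<in> B" "e \<in> set P" by blast
      have nj: "\<not> is_jump E src dst B u W1 w" using e unfolding is_jump_def by blast
      have "sum x (N \<inter> set W1) = phi w - phi u" using H1[OF e(2,3)] e(1) w_def hdu by simp
      then show ?thesis using split IH JS nj by simp
    next
      case nA: False
      have noB: "\<forall>P\<in>B. e \<notin> set P" if e: "e \<in> set W1" for e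
      proof (rule ccontr)
        assume "\<not> (\<forall>P\<in>B. e \<notin> set P)"
        then obtain P where P: "P \<in> B" "e \<in> set P" by blast
        then have sB: "src e \<in> ?BV" and dB: "dst e \<in> ?BV" unfolding B_vertices_def by auto
        have W1e: "W1 = butlast W1 @ [last W1]" using ne by simp
        have el: "e = last W1"
        proof (rule ccontr)
          assume "e \<noteq> last W1"
          then have "e \<in> set (butlast W1)" using e W1e by (metis rotate1.simps(2) set_ConsD set_rotate1)
          then have "dst e \<in> set (butlast (map dst W1))" by (simp add: map_butlast[symmetric])
          then show False using int dB by blast
        qed
        have "length W1 < 2"
        proof (rule ccontr)
          assume "\<not> length W1 < 2"
          then have "src (last W1) \<in> set (butlast (map dst W1))" using walk_src_last[OF wk1] by simp
          then show False using int sB el by blast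
        qed
        then have "W1 = [e]" using ne el by (cases W1) auto
        then show False using nA P by blast
      qed
      have s0: "sum x (N \<inter> set W1) = 0"
      proof (rule sum.neutral, rule ballI)
        fix e assume "e \<in> N \<inter> set W1"
        then show "x e = 0" using H2[OF noB] by auto
      qed
      show ?thesis
      proof (cases "is_jump E src dst B u W1 w")
        case True
        have uw: "u \<noteq> w" using True ne w_def unfolding is_jump_def is_path_def by auto
        have notin: "(u, w) \<notin> J_path E src dst B W2"
        proof
          assume "(u, w) \<in> J_path E src dst B W2"
          then have "u \<in> src ` set W2" using J_path_sub by blast
          then have "u \<in> dst ` set (butlast W2)" using walk_src_sub[OF wk2] zw uw by blast
          then obtain e' where e': "e' \<in> set (butlast W2)" "dst e' = u" by blast
          then have W2ne: "W2 \<noteq> []" by auto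
          have "u \<in> dst ` set W" using e' WW by (auto dest: in_set_butlastD)
          then have "u = v" using less.prems(3) by blast
          then have "dst e' = dst (last W2)" using e' v WW W2ne by simp
          moreover have "e' \<in> set W2" "last W2 \<in> set W2" using e' W2ne by (auto dest: in_set_butlastD)
          moreover have "inj_on dst (set W2)" using dW by (simp add: distinct_map)
          ultimately have "e' = last W2" by (meson inj_onD)
          moreover have "distinct W2" using dist WW by simp
          moreover have "distinct (butlast W2 @ [last W2])" using \<open>distinct W2\<close> W2ne by simp
          ultimately show False using e' by auto
        qed
        have "J_path E src dst B W = insert (u,w) (J_path E src dst B W2)" using JS True by simp
        then have "(\<Sum>(a, b)\<in>J_path E src dst B W. phi a - phi b) = (phi u - phi w) + (\<Sum>(a, b)\<in>J_path E src dst B W2. phi a - phi b)"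
          using finJ notin by simp
        then show ?thesis using split s0 IH by simp
      next
        case False
        have np: "\<not> is_path E src dst u W1 w"
          using False ne less.prems(4) wB int nA w_def unfolding is_jump_def by blast
        then have "u \<in> dst ` set W1" using wk1 zw dW unfolding is_path_def by auto
        then obtain e1 where e1: "e1 \<in> set W1" "dst e1 = u" by blast
        have "u = v" using less.prems(3) e1 WW by auto
        have "u = w"
        proof (cases "W2 = []")
          case True then show ?thesis using zw wk2 \<open>u = v\<close> by simp
        next
          case False
          then have "v \<in> dst ` set W2" using v WW by simp
          then show ?thesis using dW e1 \<open>u = v\<close> by auto
        qed
        then show ?thesis using split s0 IH JS False by simp
      qed
    qed
  qed
qed

lemma J_cycle_rotate: "W \<noteq> [] \<Longrightarrow> J_cycle E src dst B (rotate m W) = J_cycle E src dst B W"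
proof -
  assume ne: "W \<noteq> []"
  have r: "rotate (n + length W * m) W = rotate n W" for n
  proof -
    have "(n + length W * m) mod length W = n mod length W" by simp
    then show ?thesis by (metis rotate_conv_mod)
  qed
  have ge: "m \<le> length W * m" using ne by (cases W) auto
  show ?thesis unfolding J_cycle_def
  proof (intro set_eqI iffI)
    fix p assume "p \<in> {(u, v). \<exists>n j. 0 < j \<and> j \<le> length (rotate m W) \<and> is_jump E src dst B u (take j (rotate n (rotate m W))) v}"
    then show "p \<in> {(u, v). \<exists>n j. 0 < j \<and> j \<le> length W \<and> is_jump E src dst B u (take j (rotate n W)) v}"
      by (auto simp: rotate_rotate)
  next
    fix p assume "p \<in> {(u, v). \<exists>n j. 0 < j \<and> j \<le> length W \<and> is_jump E src dst B u (take j (rotate n W)) v}"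
    then obtain a b n j where p: "p = (a,b)" "0 < j" "j \<le> length W" "is_jump E src dst B a (take j (rotate n W)) b" by blast
    have "rotate (n + length W * m - m) (rotate m W) = rotate n W"
    proof -
      have "n + length W * m - m + m = n + length W * m" using ge by linarith
      then show ?thesis using r[of n] by (simp add: rotate_rotate)
    qed
    then show "p \<in> {(u, v). \<exists>n j. 0 < j \<and> j \<le> length (rotate m W) \<and> is_jump E src dst B u (take j (rotate n (rotate m W))) v}"
    proof -
      have "0 < j \<and> j \<le> length (rotate m W) \<and> is_jump E src dst B a (take j (rotate (n + length W * m - m) (rotate m W))) b"
        using p \<open>rotate (n + length W * m - m) (rotate m W) = rotate n W\<close> by simp
      then show ?thesis using p(1) by blast
    qed
  qed
qed

lemma J_cycle_path:
  assumes wk: "walk E src dst u W u" and ne: "W \<noteq> []" and uB: "u \<in> B_vertices src dst B"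
  shows "J_cycle E src dst B W = J_path E src dst B W"
proof (intro set_eqI iffI)
  fix p assume "p \<in> J_cycle E src dst B W"
  then obtain a b n j where p: "p = (a,b)" "0 < j" "j \<le> length W" and jq: "is_jump E src dst B a (take j (rotate n W)) b"
    unfolding J_cycle_def by blast
  define i where "i = n mod length W"
  have il: "i < length W" using ne i_def by simp
  have rot: "rotate n W = drop i W @ take i W" using i_def by (simp add: rotate_drop_take)
  show "p \<in> J_path E src dst B W"
  proof (cases "j \<le> length W - i")
    case True
    then have "take j (rotate n W) = take ((i + j) - i) (drop i W)" using rot by simp
    then show ?thesis using jq p True il unfolding J_path_def
      by (intro CollectI; simp only: case_prod_conv; intro exI[of _ i] exI[of _ "i+j"]) auto
  next
    case False
    define D where "D = drop i W"
    define T where "T = take (j - (length W - i)) (take i W)"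
    have Dne: "D \<noteq> []" using il D_def by simp
    have Tne: "T \<noteq> []" using False il p(3) T_def by auto
    have Q: "take j (rotate n W) = D @ T" using rot False D_def T_def by (simp add: take_append)
    have "dst (last D) = u" using walk_ends[OF wk ne] il D_def by simp
    moreover have "dst (last D) \<in> set (butlast (map dst (D @ T)))"
      using Dne Tne by (simp add: butlast_append)
    ultimately have "u \<in> set (butlast (map dst (take j (rotate n W))))" using Q by simp
    then show ?thesis using jq uB unfolding is_jump_def by blast
  qed
next
  fix p assume "p \<in> J_path E src dst B W"
  then obtain a b i j where p: "p = (a,b)" and ij: "i < j" "j \<le> length W"
      and jq: "is_jump E src dst B a (take (j - i) (drop i W)) b"
      unfolding J_path_def by blast
  have "rotate i W = drop i W @ take i W" using ij by (simp add: rotate_drop_take)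
  then have "take (j - i) (rotate i W) = take (j - i) (drop i W)" using ij by (simp add: take_append)
  then show "p \<in> J_cycle E src dst B W" using p ij jq unfolding J_cycle_def
    by (intro CollectI; simp only: case_prod_conv; intro exI[of _ i] exI[of _ "j-i"]) auto
qed

lemma walk_mono: "walk E src dst u P v \<Longrightarrow> set P \<subseteq> E' \<Longrightarrow> walk E' src dst u P v"
  by (induction P arbitrary: u) auto

theorem lemma10:
  fixes V :: "'v set" and E :: "'e set" and src dst :: "'e \<Rightarrow> 'v"
    and s t :: 'v and N :: "'e set" and x :: "'e \<Rightarrow> real" and B :: "'e list set"
  assumes "finite V" and "finite E"
    and "\<forall>e\<in>E. src e \<in> V \<and> dst e \<in> V"
    and "s \<in> V" and "t \<in> V" and "s \<noteq> t"
    and "N \<subseteq> E"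
    and "\<forall>P\<in>st_paths E src dst s t. set P \<inter> N \<noteq> {}"
    and "\<forall>e\<in>E. \<exists>P\<in>st_paths E src dst s t. e \<in> set P"
    and "x \<in> core E src dst s t N"
    and "max_family E src dst s t N B"
  shows "(\<forall>P\<in>st_paths E src dst s t.
            sum x (N \<inter> set P) = 1 + (\<Sum>(u, v)\<in>J_path E src dst B P.
               potential E src dst s N x u - potential E src dst s N x v))
       \<and> (\<forall>C. is_cycle E src dst C \<longrightarrow>
            sum x (N \<inter> set C) = (\<Sum>(u, v)\<in>J_cycle E src dst B C.
               potential E src dst s N x u - potential E src dst s N x v))"
proof -
  note finE = assms(2)
  have finN: "finite N" using assms(7) finE finite_subset by blast
  have xnn: "\<And>e. e \<in> N \<Longrightarrow> 0 \<le> x e" and xsum: "sum x N = real (sigmaN E src dst s t N)"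
    and xS: "\<And>S. S \<subseteq> N \<Longrightarrow> real (gamma_tilde E src dst s t N S) \<le> sum x S"
    using assms(10) unfolding core_def by auto
  have Bfin: "finite B" and Bsub: "B \<subseteq> st_paths E src dst s t" and Bpw: "pairwise (disjoint_on N) B"
    and Bcard: "card B = sigmaN E src dst s t N"
    using assms(11) unfolding max_family_def by auto
  have sig1: "1 \<le> sigmaN E src dst s t N" if "P \<in> st_paths E src dst s t" for P
    unfolding sigmaN_def using Max_ge1[OF finite_paths[OF finE] that] .
  have F1: "1 \<le> sum x (N \<inter> set P)" if P: "P \<in> st_paths E src dst s t" for P
  proof -
    define S where "S = N \<inter> set P"
    have "1 \<le> gamma_tilde E src dst s t N S"
    proof (cases "S = N")
      case True then show ?thesis using sig1[OF P] unfolding gamma_tilde_def by simp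
    next
      case False
      have fin': "finite (S \<union> (E - N))" using finE assms(7) S_def finite_subset by auto
      have wk: "walk E src dst s P t" and dd: "distinct (s # map dst P)" using P unfolding st_paths_def is_path_def by auto
      have "set P \<subseteq> S \<union> (E - N)" using walk_set[OF wk] S_def by auto
      then have "P \<in> st_paths (S \<union> (E - N)) src dst s t"
        using walk_mono[OF wk] dd unfolding st_paths_def is_path_def by auto
      then show ?thesis using False Max_ge1[OF finite_paths[OF fin'], of P] unfolding gamma_tilde_def gammaS_def by simp
    qed
    then show ?thesis using xS[of S] S_def by force
  qed
  define U where "U = (\<Union>P\<in>B. N \<inter> set P)"
  have UN: "U \<subseteq> N" unfolding U_def by auto
  have sumU: "sum x U = (\<Sum>P\<in>B. sum x (N \<inter> set P))"
    unfolding U_def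
  proof (rule sum.UNION_disjoint[OF Bfin])
    show "\<forall>i\<in>B. finite (N \<inter> set i)" using finN by auto
    show "\<forall>i\<in>B. \<forall>j\<in>B. i \<noteq> j \<longrightarrow> N \<inter> set i \<inter> (N \<inter> set j) = {}"
      using Bpw unfolding pairwise_def disjoint_on_def by blast
  qed
  have sN: "sum x N = sum x U + sum x (N - U)"
    using UN finN by (metis sum.subset_diff add.commute)
  have nnNU: "\<forall>e\<in>N - U. 0 \<le> x e" using xnn by auto
  have ge0: "0 \<le> sum x (N - U)" using nnNU by (intro sum_nonneg) auto
  have termge: "\<forall>P\<in>B. 0 \<le> sum x (N \<inter> set P) - 1" using F1 Bsub by auto
  have "(\<Sum>P\<in>B. sum x (N \<inter> set P) - 1) = sum x U - real (card B)"
    using sumU by (simp add: sum_subtractf)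
  also have "\<dots> = - sum x (N - U)" using sN xsum Bcard by simp
  finally have eq: "(\<Sum>P\<in>B. sum x (N \<inter> set P) - 1) = - sum x (N - U)" .
  have s0: "0 \<le> (\<Sum>P\<in>B. sum x (N \<inter> set P) - 1)" using termge by (intro sum_nonneg) auto
  have "(\<Sum>P\<in>B. sum x (N \<inter> set P) - 1) = 0"
    using eq ge0 s0 by linarith
  then have "\<forall>P\<in>B. sum x (N \<inter> set P) - 1 = 0"
    using sum_nonneg_eq_0_iff[OF Bfin, of "\<lambda>P. sum x (N \<inter> set P) - 1"] termge by simp
  then have F3: "\<And>P. P \<in> B \<Longrightarrow> sum x (N \<inter> set P) = 1" by simp
  have "sum x (N - U) = 0" using eq ge0 s0 by linarith
  then have z2: "\<forall>e\<in>N - U. x e = 0"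
    using sum_nonneg_eq_0_iff[of "N - U" x] finN nnNU by simp
  have F2: "x e = 0" if "\<forall>P\<in>B. e \<notin> set P" "e \<in> N" for e
  proof -
    have "e \<notin> U" using that(1) unfolding U_def by simp
    then show ?thesis using z2 that(2) by simp
  qed
  let ?phi = "potential E src dst s N x"
  have F4: "?phi z = sum x (N \<inter> set A)" if P0: "P0 \<in> B" "P0 = A @ C" and wA: "walk E src dst s A z" for P0 A C z
  proof -
    have P0p: "is_path E src dst s P0 t" using P0 Bsub unfolding st_paths_def by auto
    then have "walk E src dst s (A @ C) t" using P0(2) unfolding is_path_def by simp
    then obtain z' where w1: "walk E src dst s A z'" and w2: "walk E src dst z' C t"
      unfolding walk_append by blast
    have zz: "z' = z" using w1 wA by (induction A arbitrary: s) auto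
    have Ap: "is_path E src dst s A z" using wA P0p P0 unfolding is_path_def by auto
    have setEq: "{(\<Sum>e\<in>set P. if e \<in> N then x e else 0) | P. is_path E src dst s P z}
        = (\<lambda>P. sum x (N \<inter> set P)) ` st_paths E src dst s z"
    proof -
      have cnv: "\<And>P. (\<Sum>e\<in>set P. if e \<in> N then x e else 0) = sum x (N \<inter> set P)"
        by (metis (no_types) Int_commute finite_set sum.inter_restrict)
      show ?thesis by (simp only: cnv) (auto simp: st_paths_def)
    qed
    have fin: "finite ((\<lambda>P. sum x (N \<inter> set P)) ` st_paths E src dst s z)"
      using finite_paths[OF finE, of src dst s z] by simp
    have "distinct P0" using P0p unfolding is_path_def by (simp add: distinct_map)
    then have disAC: "set A \<inter> set C = {}" using P0(2) by simp
    have splitP: "sum x (N \<inter> set P0) = sum x (N \<inter> set A) + sum x (N \<inter> set C)"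
    proof -
      have "N \<inter> set P0 = (N \<inter> set A) \<union> (N \<inter> set C)" using P0 by auto
      moreover have "(N \<inter> set A) \<inter> (N \<inter> set C) = {}" using disAC by auto
      ultimately show ?thesis by (simp add: sum.union_disjoint)
    qed
    have lower: "sum x (N \<inter> set A) \<le> sum x (N \<inter> set Q)" if Q: "is_path E src dst s Q z" for Q
    proof -
      have wQC: "walk E src dst s (Q @ C) t" using Q w2 zz unfolding is_path_def walk_append by blast
      then obtain R where R: "is_path E src dst s R t" "set R \<subseteq> set (Q @ C)" using walk_to_path[OF wQC] by blast
      have "1 \<le> sum x (N \<inter> set R)" using F1 R(1) unfolding st_paths_def by blast
      also have "\<dots> \<le> sum x (N \<inter> set Q \<union> N \<inter> set C)"
        using R(2) xnn by (intro sum_mono2) auto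
      also have "\<dots> \<le> sum x (N \<inter> set Q) + sum x (N \<inter> set C)"
      proof -
        have "0 \<le> sum x ((N \<inter> set Q) \<inter> (N \<inter> set C))" using xnn by (intro sum_nonneg) auto
        then show ?thesis by (simp add: sum_Un)
      qed
      finally show ?thesis using splitP F3[OF P0(1)] by linarith
    qed
    have "?phi z = Min ((\<lambda>P. sum x (N \<inter> set P)) ` st_paths E src dst s z)"
      unfolding potential_def setEq ..
    also have "\<dots> = sum x (N \<inter> set A)"
    proof (rule Min_eqI[OF fin])
      show "\<And>y. y \<in> (\<lambda>P. sum x (N \<inter> set P)) ` st_paths E src dst s z \<Longrightarrow> sum x (N \<inter> set A) \<le> y"
        using lower unfolding st_paths_def by blast
      show "sum x (N \<inter> set A) \<in> (\<lambda>P. sum x (N \<inter> set P)) ` st_paths E src dst s z"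
        using Ap unfolding st_paths_def by blast
    qed
    finally show ?thesis .
  qed
  let ?BV = "B_vertices src dst B"
  have BVe: "\<And>P e. P \<in> B \<Longrightarrow> e \<in> set P \<Longrightarrow> src e \<in> ?BV \<and> dst e \<in> ?BV"
    unfolding B_vertices_def by blast
  have H1: "sum x (N \<inter> {e}) = ?phi (dst e) - ?phi (src e)" if P: "P \<in> B" "e \<in> set P" for e P
  proof -
    obtain A C where AC: "P = A @ e # C" using split_list[OF P(2)] by blast
    have Pp: "is_path E src dst s P t" using P Bsub unfolding st_paths_def by auto
    then have "walk E src dst s (A @ [e] @ C) t" using AC unfolding is_path_def by simp
    then obtain z where wA: "walk E src dst s A z" and we: "walk E src dst z ([e] @ C) t"
      unfolding walk_append by blast
    then have zs: "z = src e" and eE: "e \<in> E" by auto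
    have wAe: "walk E src dst s (A @ [e]) (dst e)" unfolding walk_append using wA zs eE by auto
    have p1: "?phi (src e) = sum x (N \<inter> set A)" using F4[OF P(1), of A "e # C" "src e"] AC wA zs by simp
    have p2: "?phi (dst e) = sum x (N \<inter> set (A @ [e]))" using F4[OF P(1), of "A @ [e]" C "dst e"] AC wAe by simp
    have "distinct P" using Pp unfolding is_path_def by (simp add: distinct_map)
    then have eA: "e \<notin> set A" using AC by simp
    have "N \<inter> set (A @ [e]) = (N \<inter> set A) \<union> (N \<inter> {e})" by auto
    moreover have "(N \<inter> set A) \<inter> (N \<inter> {e}) = {}" using eA by auto
    ultimately have "sum x (N \<inter> set (A @ [e])) = sum x (N \<inter> set A) + sum x (N \<inter> {e})"
      by (simp add: sum.union_disjoint)
    then show ?thesis using p1 p2 by simp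
  qed
  have H1': "\<forall>P\<in>B. \<forall>e\<in>set P. sum x (N \<inter> {e}) = ?phi (dst e) - ?phi (src e)" using H1 by blast
  have F2': "\<forall>e. (\<forall>P\<in>B. e \<notin> set P) \<longrightarrow> e \<in> N \<longrightarrow> x e = 0" using F2 by blast
  note SF = sum_formula[where phi = "potential E src dst s N x" and src = src and dst = dst and E = E and x = x and N = N and B = B, OF H1' F2']
  have ends: "s \<in> ?BV \<and> t \<in> ?BV \<and> ?phi s = 0 \<and> ?phi t = 1" if P: "P \<in> st_paths E src dst s t" for P
  proof -
    have "1 \<le> card B" using sig1[OF P] Bcard by simp
    then obtain P0 where P0: "P0 \<in> B" by fastforce
    have P0p: "is_path E src dst s P0 t" using P0 Bsub unfolding st_paths_def by auto
    then have wk: "walk E src dst s P0 t" unfolding is_path_def by simp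
    have ne: "P0 \<noteq> []" using wk assms(6) by auto
    have "s \<in> ?BV" using BVe[OF P0, of "hd P0"] walk_ends[OF wk ne] ne by simp
    moreover have "t \<in> ?BV" using BVe[OF P0, of "last P0"] walk_ends[OF wk ne] ne by simp
    moreover have "?phi s = 0" using F4[OF P0, of "[]" P0 s] by simp
    moreover have "?phi t = 1" using F4[OF P0, of P0 "[]" t] wk F3[OF P0] by simp
    ultimately show ?thesis by blast
  qed
  have partI: "\<forall>P\<in>st_paths E src dst s t.
            sum x (N \<inter> set P) = 1 + (\<Sum>(u, v)\<in>J_path E src dst B P. ?phi u - ?phi v)"
  proof
    fix P assume P: "P \<in> st_paths E src dst s t"
    then have wk: "walk E src dst s P t" and dd: "distinct (s # map dst P)" unfolding st_paths_def is_path_def by auto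
    have "sum x (N \<inter> set P) = ?phi t - ?phi s + (\<Sum>(u, v)\<in>J_path E src dst B P. ?phi u - ?phi v)"
      using SF[OF wk] dd ends[OF P] by auto
    then show "sum x (N \<inter> set P) = 1 + (\<Sum>(u, v)\<in>J_path E src dst B P. ?phi u - ?phi v)"
      using ends[OF P] by simp
  qed
  have partII: "sum x (N \<inter> set C) = (\<Sum>(u, v)\<in>J_cycle E src dst B C. ?phi u - ?phi v)"
    if cyc: "is_cycle E src dst C" for C
  proof -
    define a0 where "a0 = src (hd C)"
    have Cne: "C \<noteq> []" and wk: "walk E src dst a0 C a0" and dC: "distinct (map dst C)"
      using cyc unfolding is_cycle_def a0_def by auto
    show ?thesis
    proof (cases "\<exists>e\<in>set C. src e \<in> ?BV")
      case True
      then obtain e where e: "e \<in> set C" "src e \<in> ?BV" by blast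
      obtain C1 C2 where CC: "C = C1 @ e # C2" using split_list[OF e(1)] by blast
      obtain z where w1: "walk E src dst a0 C1 z" and w2: "walk E src dst z (e # C2) a0"
        using wk CC walk_append by metis
      have ze: "z = src e" using w2 by simp
      define C' where "C' = (e # C2) @ C1"
      have wk': "walk E src dst (src e) C' (src e)" unfolding C'_def walk_append using w1 w2 ze by blast
      have rot: "C' = rotate (length C1) C" using CC C'_def by (simp add: rotate_append)
      have dC': "distinct (map dst C')" using dC rot by (simp add: rotate_map[symmetric])
      have C'ne: "C' \<noteq> []" using C'_def by simp
      have J: "J_cycle E src dst B C = J_path E src dst B C'"
        using J_cycle_rotate[OF Cne, of E src dst B "length C1"] J_cycle_path[OF wk' C'ne e(2)] rot by simp
      have "sum x (N \<inter> set C') = ?phi (src e) - ?phi (src e) + (\<Sum>(u, v)\<in>J_path E src dst B C'. ?phi u - ?phi v)"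
        using SF[OF wk' dC'] e(2) by simp
      then show ?thesis using J rot by simp
    next
      case False
      have J: "J_cycle E src dst B C = {}"
      proof (rule ccontr)
        assume "J_cycle E src dst B C \<noteq> {}"
        then obtain a b n j where jq: "0 < j" "j \<le> length C" "is_jump E src dst B a (take j (rotate n C)) b"
          unfolding J_cycle_def by blast
        define Q where "Q = take j (rotate n C)"
        have Qne: "Q \<noteq> []" using jq(3) unfolding Q_def is_jump_def by simp
        have Qp: "walk E src dst a Q b" using jq(3) unfolding Q_def is_jump_def is_path_def by simp
        have aB: "a \<in> ?BV" using jq unfolding is_jump_def by blast
        have "hd Q \<in> set C" using Qne Q_def by (metis hd_in_set in_set_takeD set_rotate)
        then show False using False aB walk_ends[OF Qp Qne] by blast
      qed
      have "sum x (N \<inter> set C) = 0"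
      proof (rule sum.neutral, rule ballI)
        fix e assume e: "e \<in> N \<inter> set C"
        have "\<forall>P\<in>B. e \<notin> set P" using BVe False e by blast
        then show "x e = 0" using F2 e by blast
      qed
      then show ?thesis using J by simp
    qed
  qed
  show ?thesis using partI partII by blast
qed

end
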